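(* Let $S$ be an additive numerical semigroup with multiplicity $e$ whose blowup $B$ equals $\mathbb N$ (equivalently, $a_1-e=1$). Then ${\rm d}_{\max}(S)=d(e-1;B^{\mathcal D})$.
   Context: $S$ is a numerical semigroup (a submonoid of $\mathbb N$ with finite complement) with minimal generators $e<a_1<\dots<a_t$. An $S$-factorization of $n$ is $(c_0,\dots,c_t)\in\mathbb N^{t+1}$ with $c_0e+\sum c_ia_i=n$, of length $\sum c_i$. ${\rm ord}(n;S)$ is the maximal such length, ${\rm d}_{\max}(n;S)$ is the number of factorizations of maximal length, and ${\rm d}_{\max}(S)=\max_{n\in S}{\rm d}_{\max}(n;S)$. $S$ is additive if ${\rm ord}(u+e;S)={\rm ord}(u;S)+1$ for all $u\in S$. The blowup is $B=\langle e,d_1,\dots,d_t\rangle$ with $d_i=a_i-e$, and $\mathcal D=(e,d_1,\dots,d_t)$. $d(b;B^{\mathcal D})$ is the number of tuples $(x_0,\dots,x_t)\in\mathbb N^{t+1}$ with $x_0e+\sum x_id_i=b$. *)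

theory Defs
  imports Main
begin

definition numerical_semigroup :: "nat set \<Rightarrow> bool" where
  "numerical_semigroup S \<longleftrightarrow> 0 \<in> S \<and> (\<forall>x\<in>S. \<forall>y\<in>S. x + y \<in> S) \<and> finite (UNIV - S)"

definition min_gens :: "nat set \<Rightarrow> nat set" where
  "min_gens S = {g \<in> S. g \<noteq> 0 \<and> \<not> (\<exists>x\<in>S. \<exists>y\<in>S. x \<noteq> 0 \<and> y \<noteq> 0 \<and> x + y = g)}"

definition multiplicity :: "nat set \<Rightarrow> nat" where
  "multiplicity S = Min (S - {0})"

definition factorizations :: "nat set \<Rightarrow> nat \<Rightarrow> (nat \<Rightarrow> nat) set" where
  "factorizations S n = {c. (\<forall>g. g \<notin> min_gens S \<longrightarrow> c g = 0) \<and> (\<Sum>g\<in>min_gens S. c g * g) = n}"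

definition fact_len :: "nat set \<Rightarrow> (nat \<Rightarrow> nat) \<Rightarrow> nat" where
  "fact_len S c = (\<Sum>g\<in>min_gens S. c g)"

definition ord :: "nat set \<Rightarrow> nat \<Rightarrow> nat" where
  "ord S n = Max (fact_len S ` factorizations S n)"

definition dmax_elem :: "nat set \<Rightarrow> nat \<Rightarrow> nat" where
  "dmax_elem S n = card {c \<in> factorizations S n. fact_len S c = ord S n}"

definition dmax :: "nat set \<Rightarrow> nat" where
  "dmax S = Max (dmax_elem S ` S)"

definition additive :: "nat set \<Rightarrow> bool" where
  "additive S \<longleftrightarrow> (\<forall>u\<in>S. ord S (u + multiplicity S) = ord S u + 1)"

text \<open>The blowup tuple D = (e, d_1, ..., d_t), indexed by the minimal generators:
  the generator e is sent to e, a generator a_i \<noteq> e is sent to d_i = a_i - e.\<close>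
definition blowup_weight :: "nat set \<Rightarrow> nat \<Rightarrow> nat" where
  "blowup_weight S g = (if g = multiplicity S then g else g - multiplicity S)"

definition blowup_reps :: "nat set \<Rightarrow> nat \<Rightarrow> (nat \<Rightarrow> nat) set" where
  "blowup_reps S b = {x. (\<forall>g. g \<notin> min_gens S \<longrightarrow> x g = 0) \<and>
      (\<Sum>g\<in>min_gens S. x g * blowup_weight S g) = b}"

definition blowup :: "nat set \<Rightarrow> nat set" where
  "blowup S = {b. blowup_reps S b \<noteq> {}}"

definition d_blowup :: "nat set \<Rightarrow> nat \<Rightarrow> nat" where
  "d_blowup S b = card (blowup_reps S b)"

end

theory Submission
  imports Defs "HOL-Library.FuncSet"
begin


locale ns =
  fixes S :: "nat set"
  assumes ns: "numerical_semigroup S"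
begin

abbreviation "G \<equiv> min_gens S"

lemma zero_in: "0 \<in> S" and add_in: "x \<in> S \<Longrightarrow> y \<in> S \<Longrightarrow> x + y \<in> S"
  and fin_compl: "finite (UNIV - S)"
  using ns unfolding numerical_semigroup_def by auto

lemma mult_in: "g \<in> S \<Longrightarrow> k * g \<in> S"
  by (induction k) (auto simp: zero_in add_in)

lemma sum_in: "finite A \<Longrightarrow> (\<And>a. a \<in> A \<Longrightarrow> f a \<in> S) \<Longrightarrow> sum f A \<in> S"
  by (induction A rule: finite_induct) (auto simp: zero_in add_in)

lemma S_infinite: "infinite S"
proof
  assume "finite S"
  then have "finite (S \<union> (UNIV - S))" using fin_compl by simp
  then show False by simp
qed

definition m0 where "m0 = (LEAST x. x \<in> S \<and> x \<noteq> 0)"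

lemma m0_props: "m0 \<in> S" "m0 \<noteq> 0"
proof -
  have ex: "\<exists>x. x \<in> S \<and> x \<noteq> 0"
  proof (rule ccontr)
    assume "\<not> ?thesis" then have "S \<subseteq> {0}" by auto
    then show False using S_infinite finite_subset by blast
  qed
  show "m0 \<in> S" "m0 \<noteq> 0" unfolding m0_def using LeastI_ex[OF ex] by auto
qed

lemma m0_le: "x \<in> S \<Longrightarrow> x \<noteq> 0 \<Longrightarrow> m0 \<le> x"
  unfolding m0_def by (simp add: Least_le)

lemma G_sub: "g \<in> G \<Longrightarrow> g \<in> S \<and> g \<noteq> 0"
  unfolding min_gens_def by auto

lemma G_ge: "g \<in> G \<Longrightarrow> m0 \<le> g"
  using G_sub m0_le by blast

lemma m0_G: "m0 \<in> G"
proof -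
  have "\<not> (\<exists>x\<in>S. \<exists>y\<in>S. x \<noteq> 0 \<and> y \<noteq> 0 \<and> x + y = m0)"
  proof
    assume "\<exists>x\<in>S. \<exists>y\<in>S. x \<noteq> 0 \<and> y \<noteq> 0 \<and> x + y = m0"
    then obtain x y where "x \<in> S" "y \<in> S" "x \<noteq> 0" "y \<noteq> 0" "x + y = m0" by blast
    with m0_le[of x] m0_le[of y] show False by linarith
  qed
  then show ?thesis using m0_props unfolding min_gens_def by auto
qed

lemma G_fin: "finite G"
proof -
  have "G \<subseteq> insert m0 ((\<lambda>x. x + m0) ` (UNIV - S))"
  proof
    fix g assume g: "g \<in> G"
    show "g \<in> insert m0 ((\<lambda>x. x + m0) ` (UNIV - S))"
    proof (cases "g = m0")
      case False
      with G_ge[OF g] have gt: "g > m0" by simp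
      have "g - m0 \<notin> S"
      proof
        assume "g - m0 \<in> S"
        then have "\<exists>x\<in>S. \<exists>y\<in>S. x \<noteq> 0 \<and> y \<noteq> 0 \<and> x + y = g"
          using m0_props gt by (intro bexI[of _ m0] bexI[of _ "g - m0"]) auto
        with g show False unfolding min_gens_def by blast
      qed
      then show ?thesis using gt by (auto intro!: image_eqI[of _ _ "g - m0"])
    qed simp
  qed
  then show ?thesis using fin_compl finite_subset by blast
qed

lemma fact_in_S: "c \<in> factorizations S n \<Longrightarrow> n \<in> S"
  unfolding factorizations_def using G_fin G_sub
  by (auto intro!: sum_in mult_in)

lemma fin_funs: "finite A \<Longrightarrow> finite {c::nat\<Rightarrow>nat. (\<forall>g. g \<notin> A \<longrightarrow> c g = 0) \<and> (\<forall>g. c g \<le> n)}"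
proof -
  assume A: "finite A"
  have "{c::nat\<Rightarrow>nat. (\<forall>g. g \<notin> A \<longrightarrow> c g = 0) \<and> (\<forall>g. c g \<le> n)}
        \<subseteq> (\<lambda>f g. if g \<in> A then f g else 0) ` PiE A (\<lambda>_. {..n})"
  proof
    fix c assume c: "c \<in> {c::nat\<Rightarrow>nat. (\<forall>g. g \<notin> A \<longrightarrow> c g = 0) \<and> (\<forall>g. c g \<le> n)}"
    show "c \<in> (\<lambda>f g. if g \<in> A then f g else 0) ` PiE A (\<lambda>_. {..n})"
      using c by (intro image_eqI[of _ _ "restrict c A"]) (auto simp: fun_eq_iff)
  qed
  moreover have "finite (PiE A (\<lambda>_. {..n::nat}))" using A by (simp add: finite_PiE)
  ultimately show ?thesis using finite_subset by blast
qed

lemma fact_bound: "c \<in> factorizations S n \<Longrightarrow> c g \<le> n"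
proof -
  assume c: "c \<in> factorizations S n"
  show "c g \<le> n"
  proof (cases "g \<in> G")
    case True
    have "1 \<le> g" using G_sub[OF True] by simp
    then have "c g \<le> c g * g" by simp
    also have "\<dots> \<le> (\<Sum>h\<in>G. c h * h)" using True G_fin by (intro member_le_sum) auto
    finally show ?thesis using c unfolding factorizations_def by simp
  next
    case False then show ?thesis using c unfolding factorizations_def by simp
  qed
qed

lemma fact_fin: "finite (factorizations S n)"
  by (rule finite_subset[OF _ fin_funs[OF G_fin, of n]])
     (auto simp: fact_bound, auto simp: factorizations_def)

lemma ord_ge: "c \<in> factorizations S n \<Longrightarrow> fact_len S c \<le> ord S n"
  unfolding ord_def using fact_fin by (auto intro: Max_ge)

lemma ord_le: "(\<And>c. c \<in> factorizations S n \<Longrightarrow> fact_len S c \<le> B) \<Longrightarrow> Max ({}::nat set) \<le> B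
   \<Longrightarrow> ord S n \<le> B"
  unfolding ord_def
  by (cases "factorizations S n = {}") (auto simp: fact_fin)

lemma ord_eqI: "c \<in> factorizations S n \<Longrightarrow> fact_len S c = B \<Longrightarrow>
   (\<And>c. c \<in> factorizations S n \<Longrightarrow> fact_len S c \<le> B) \<Longrightarrow> ord S n = B"
  unfolding ord_def by (rule Max_eqI) (auto simp: fact_fin)

lemma len_bound: "(\<And>g. g \<in> G \<Longrightarrow> a \<le> g) \<Longrightarrow> c \<in> factorizations S n \<Longrightarrow> fact_len S c * a \<le> n"
proof -
  assume a: "\<And>g. g \<in> G \<Longrightarrow> a \<le> g" and c: "c \<in> factorizations S n"
  have "fact_len S c * a = (\<Sum>g\<in>G. c g * a)" unfolding fact_len_def by (simp add: sum_distrib_right)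
  also have "\<dots> \<le> (\<Sum>g\<in>G. c g * g)" using a by (intro sum_mono) simp
  finally show ?thesis using c unfolding factorizations_def by simp
qed

lemma delta_fact: "g \<in> G \<Longrightarrow> (\<lambda>h. if h = g then k else 0) \<in> factorizations S (k * g)
   \<and> fact_len S (\<lambda>h. if h = g then k else 0) = k"
proof -
  assume g: "g \<in> G"
  have "(\<Sum>h\<in>G. (if h = g then k else 0) * h) = (\<Sum>h\<in>G. (if h = g then k * g else 0))"
    by (rule sum.cong) auto
  also have "\<dots> = k * g" using g G_fin by simp
  finally show ?thesis unfolding factorizations_def fact_len_def using g G_fin by auto
qed

lemma Max_empty: "Max ({}::nat set) = multiplicity S"
proof -
  have "infinite (S - {0})" using S_infinite by simp
  then show ?thesis unfolding multiplicity_def by (simp add: Max.eq_fold' Min.infinite)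
qed

end



locale mn = ns +
  assumes addv: "additive S" and bl: "blowup S = UNIV"
begin

abbreviation "e \<equiv> multiplicity S"
abbreviation "w \<equiv> blowup_weight S"

lemma add_ord: "u \<in> S \<Longrightarrow> ord S (u + e) = ord S u + 1"
  using addv unfolding additive_def by blast

lemma ord0: "ord S 0 = 0"
proof -
  have z: "(\<lambda>h. 0) \<in> factorizations S 0" unfolding factorizations_def by simp
  show ?thesis
  proof (rule ord_eqI[OF z])
    show "fact_len S (\<lambda>h. 0) = 0" unfolding fact_len_def by simp
    fix c assume "c \<in> factorizations S 0"
    then have "\<forall>g. c g = 0" using fact_bound by (metis le_zero_eq)
    then show "fact_len S c \<le> 0" unfolding fact_len_def by simp
  qed
qed

lemma e_pos: "e \<noteq> 0"
proof
  assume "e = 0"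
  with add_ord[OF zero_in] show False by simp
qed

lemma one_rep: "\<exists>g\<in>G. w g = 1"
proof -
  have "1 \<in> blowup S" using bl by simp
  then obtain x where x: "x \<in> blowup_reps S 1" unfolding blowup_def by auto
  then have s: "(\<Sum>g\<in>G. x g * w g) = 1" unfolding blowup_reps_def by simp
  have "\<exists>g\<in>G. x g * w g \<noteq> 0"
  proof (rule ccontr)
    assume "\<not> ?thesis"
    then have "(\<Sum>g\<in>G. x g * w g) = 0" by (intro sum.neutral) auto
    with s show False by simp
  qed
  then obtain g where g: "g \<in> G" "x g * w g \<noteq> 0" by blast
  have "x g * w g \<le> (\<Sum>g\<in>G. x g * w g)" using g G_fin by (intro member_le_sum) auto
  then have "x g * w g \<le> 1" using s by simp
  with g have "x g * w g = 1" by linarith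
  then have "w g = 1" by simp
  with g show ?thesis by blast
qed

lemma e_in_S: "e \<in> S"
proof (rule ccontr)
  assume ne: "e \<notin> S"
  have "factorizations S e = {}" using fact_in_S ne by blast
  then have "ord S e = e" unfolding ord_def using Max_empty by simp
  moreover have "ord S e = 1" using add_ord[OF zero_in] ord0 by simp
  ultimately have e1: "e = 1" by simp
  have one: "1 \<notin> S" using ne e1 by simp
  obtain g where g: "g \<in> G" "w g = 1" using one_rep by blast
  have "g \<noteq> 1" using G_sub[OF g(1)] one by auto
  then have g2: "g = 2" using g(2) e1 unfolding blowup_weight_def by (auto split: if_splits)
  have "ord S 3 = ord S 2 + 1" using add_ord[of 2] G_sub g g2 e1 by simp
  moreover have "1 \<le> ord S 2" using delta_fact[OF g(1), of 1] ord_ge g2 by fastforce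
  moreover have "ord S 3 \<le> 1"
  proof (rule ord_le)
    fix c assume c: "c \<in> factorizations S 3"
    have "\<And>h. h \<in> G \<Longrightarrow> 2 \<le> h"
    proof -
      fix h assume "h \<in> G"
      then have "h \<noteq> 0" "h \<noteq> 1" using G_sub one by auto
      then show "2 \<le> h" by linarith
    qed
    then have "fact_len S c * 2 \<le> 3" using len_bound c by blast
    then show "fact_len S c \<le> 1" by simp
  qed (simp add: Max_empty e1)
  ultimately show False by simp
qed

lemma ord_mult: "u \<in> S \<Longrightarrow> ord S (u + k * e) = ord S u + k"
proof (induction k)
  case (Suc k)
  have "u + k * e \<in> S" using Suc.prems e_in_S by (simp add: add_in mult_in)
  then have "ord S (u + k * e + e) = ord S (u + k * e) + 1" by (rule add_ord)
  then show ?case using Suc by (simp add: ac_simps)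
qed simp

lemma e_eq: "e = m0"
proof (rule antisym)
  show "m0 \<le> e" using m0_le e_in_S e_pos by simp
  have "ord S (0 + m0 * e) = m0" using ord_mult[OF zero_in] ord0 by simp
  moreover have "e \<le> ord S (e * m0)"
    using ord_ge[OF conjunct1[OF delta_fact[OF m0_G, of e]]] conjunct2[OF delta_fact[OF m0_G, of e]] by simp
  ultimately show "e \<le> m0" by (simp add: mult.commute)
qed

lemma e_G: "e \<in> G" using e_eq m0_G by simp
lemma G_ge_e: "g \<in> G \<Longrightarrow> e \<le> g" using e_eq G_ge by simp

lemma w_pos: "g \<in> G \<Longrightarrow> 1 \<le> w g"
proof (cases "g = e")
  case True then show ?thesis using e_pos by (simp add: blowup_weight_def)
next
  case False
  assume "g \<in> G"
  with G_ge_e False have "e < g" by (simp add: le_neq_implies_less)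
  then show ?thesis using False by (simp add: blowup_weight_def)
qed

lemma w_dec: "g \<in> G \<Longrightarrow> g \<noteq> e \<Longrightarrow> g = w g + e"
  using G_ge_e unfolding blowup_weight_def by auto

lemma w_e: "w e = e" unfolding blowup_weight_def by simp

lemma ident: "c \<in> factorizations S n \<Longrightarrow>
   n = fact_len S c * e + (\<Sum>g\<in>G-{e}. c g * w g)"
proof -
  assume c: "c \<in> factorizations S n"
  have "n = (\<Sum>g\<in>G. c g * g)" using c unfolding factorizations_def by simp
  also have "\<dots> = c e * e + (\<Sum>g\<in>G-{e}. c g * g)" using G_fin e_G by (simp add: sum.remove)
  also have "(\<Sum>g\<in>G-{e}. c g * g) = (\<Sum>g\<in>G-{e}. c g * w g + c g * e)"
  proof (rule sum.cong)
    fix g assume "g \<in> G-{e}"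
    then have "g = w g + e" by (intro w_dec) auto
    then show "c g * g = c g * w g + c g * e" by (metis add_mult_distrib2)
  qed simp
  also have "\<dots> = (\<Sum>g\<in>G-{e}. c g * w g) + (\<Sum>g\<in>G-{e}. c g) * e"
    by (simp add: sum.distrib sum_distrib_right)
  also have "fact_len S c = c e + (\<Sum>g\<in>G-{e}. c g)"
    unfolding fact_len_def using G_fin e_G by (simp add: sum.remove)
  ultimately show ?thesis by (simp add: algebra_simps)
qed

lemma reps_bound: "x \<in> blowup_reps S b \<Longrightarrow> x g \<le> b"
proof -
  assume x: "x \<in> blowup_reps S b"
  show "x g \<le> b"
  proof (cases "g \<in> G")
    case True
    then have "x g \<le> x g * w g" using w_pos[OF True] by simp
    also have "\<dots> \<le> (\<Sum>h\<in>G. x h * w h)" using True G_fin by (intro member_le_sum) auto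
    finally show ?thesis using x unfolding blowup_reps_def by simp
  next
    case False then show ?thesis using x unfolding blowup_reps_def by simp
  qed
qed

lemma reps_fin: "finite (blowup_reps S b)"
  by (rule finite_subset[OF _ fin_funs[OF G_fin, of b]])
     (auto simp: reps_bound, auto simp: blowup_reps_def)

end



context mn
begin

lemma sum_two: "finite A \<Longrightarrow> a \<in> A \<Longrightarrow> b \<in> A \<Longrightarrow> a \<noteq> b \<Longrightarrow>
  (\<Sum>h\<in>A. (if h = a then (p::nat) else if h = b then q else 0)) = p + q"
proof -
  assume f: "finite A" and a: "a \<in> A" and b: "b \<in> A" and ab: "a \<noteq> b"
  have "(\<Sum>h\<in>A. (if h = a then p else if h = b then q else 0))
     = (\<Sum>h\<in>A. (if h = a then p else 0) + (if h = b then q else 0))"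
    using ab by (intro sum.cong) auto
  also have "\<dots> = p + q" using f a b by (simp add: sum.distrib)
  finally show ?thesis .
qed

lemma r_bound:
  assumes n: "n \<in> S" and c0: "c0 \<in> factorizations S n" and len: "fact_len S c0 = ord S n"
  shows "(\<Sum>g\<in>G-{e}. c0 g * w g) \<le> e - 1"
proof (rule ccontr)
  define L where "L = ord S n"
  define r where "r = (\<Sum>g\<in>G-{e}. c0 g * w g)"
  assume "\<not> ?thesis"
  then have re: "e \<le> r" unfolding r_def using e_pos by simp
  have neq: "n = L * e + r" using ident[OF c0] len unfolding L_def r_def by simp
  have ordk: "ord S (n + n * e) = L + n" using ord_mult[OF n] unfolding L_def by simp
  obtain g1 where g1: "g1 \<in> G" "w g1 = 1" using one_rep by blast
  have "\<exists>c'. c' \<in> factorizations S (n + n * e) \<and> L + n + 1 \<le> fact_len S c'"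
  proof (cases "g1 = e")
    case True
    then have e1: "e = 1" using g1 w_e by simp
    have "(n + n * e) * e = n + n * e" using e1 by simp
    then show ?thesis using delta_fact[OF e_G, of "n + n * e"] neq re e1 by (intro exI) auto
  next
    case False
    have g1e: "g1 = 1 + e" using w_dec[OF g1(1) False] g1(2) by simp
    define A where "A = L + n + 1 - (r - e)"
    define B where "B = r - e"
    have rn: "r \<le> n" using neq by simp
    have AB: "A + B = L + n + 1" unfolding A_def B_def using rn by simp
    define c' where "c' = (\<lambda>h. if h = e then A else if h = g1 then B else 0)"
    have s1: "(\<Sum>h\<in>G. c' h * h) = A * e + B * g1"
    proof -
      have "(\<Sum>h\<in>G. c' h * h) = (\<Sum>h\<in>G. (if h = e then A * e else if h = g1 then B * g1 else 0))"
        unfolding c'_def by (intro sum.cong) auto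
      also have "\<dots> = A * e + B * g1" using sum_two G_fin e_G g1(1) False by metis
      finally show ?thesis .
    qed
    have "A * e + B * g1 = (A + B) * e + B" using g1e by (simp add: algebra_simps)
    also have "\<dots> = (L + n + 1) * e + (r - e)" using AB B_def by simp
    also have "\<dots> = n + n * e" using neq re by (simp add: algebra_simps)
    finally have s2: "A * e + B * g1 = n + n * e" .
    have "c' \<in> factorizations S (n + n * e)"
      unfolding factorizations_def using s1 s2 e_G g1(1) unfolding c'_def by auto
    moreover have "fact_len S c' = A + B"
      unfolding fact_len_def c'_def using sum_two G_fin e_G g1(1) False by metis
    ultimately show ?thesis using AB by auto
  qed
  then obtain c' where "c' \<in> factorizations S (n + n * e)" "L + n + 1 \<le> fact_len S c'" by blast
  with ord_ge ordk show False by fastforce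
qed

lemma upper:
  assumes n: "n \<in> S"
  shows "dmax_elem S n \<le> card (blowup_reps S (e - 1))"
proof -
  define L where "L = ord S n"
  define M where "M = {c \<in> factorizations S n. fact_len S c = L}"
  have dm: "dmax_elem S n = card M" unfolding dmax_elem_def M_def L_def by simp
  show ?thesis
  proof (cases "M = {}")
    case True then show ?thesis using dm by simp
  next
    case False
    then obtain c0 where c0: "c0 \<in> M" by blast
    define r where "r = (\<Sum>g\<in>G-{e}. c0 g * w g)"
    have rb: "r \<le> e - 1" using r_bound[OF n] c0 unfolding M_def L_def r_def by auto
    have neq: "n = L * e + r" using ident c0 unfolding M_def r_def by auto
    have rc: "(\<Sum>g\<in>G-{e}. c g * w g) = r" if "c \<in> M" for c
      using ident[of c n] that neq unfolding M_def by auto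
    obtain g1 where g1: "g1 \<in> G" "w g1 = 1" using one_rep by blast
    define f where "f c = (\<lambda>g. (if g = e then 0 else c g) + (if g = g1 then e - 1 - r else 0))" for c :: "nat \<Rightarrow> nat"
    have fin: "f ` M \<subseteq> blowup_reps S (e - 1)"
    proof
      fix x assume "x \<in> f ` M"
      then obtain c where c: "c \<in> M" and x: "x = f c" by blast
      have supp: "\<forall>g. g \<notin> G \<longrightarrow> x g = 0"
        using c g1 unfolding x f_def M_def factorizations_def by auto
      have "(\<Sum>g\<in>G. x g * w g) = (\<Sum>g\<in>G. (if g = e then 0 else c g * w g) + (if g = g1 then (e - 1 - r) * w g else 0))"
        unfolding x f_def by (intro sum.cong) (auto simp: algebra_simps)
      also have "\<dots> = (\<Sum>g\<in>G. (if g = e then 0 else c g * w g)) + (e - 1 - r)"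
        using G_fin g1 by (simp add: sum.distrib)
      also have "(\<Sum>g\<in>G. (if g = e then 0 else c g * w g)) = (\<Sum>g\<in>G-{e}. c g * w g)"
        using G_fin e_G by (simp add: sum.remove)
      also have "\<dots> = r" using rc c by simp
      finally have "(\<Sum>g\<in>G. x g * w g) = e - 1" using rb by simp
      then show "x \<in> blowup_reps S (e - 1)" using supp unfolding blowup_reps_def by simp
    qed
    have inj: "inj_on f M"
    proof (rule inj_onI)
      fix c c' assume c: "c \<in> M" and c': "c' \<in> M" and eq: "f c = f c'"
      have ne: "c g = c' g" if "g \<noteq> e" for g
        using fun_cong[OF eq, of g] that unfolding f_def by simp
      have "fact_len S c = c e + (\<Sum>g\<in>G-{e}. c g)" "fact_len S c' = c' e + (\<Sum>g\<in>G-{e}. c' g)"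
        unfolding fact_len_def using G_fin e_G by (simp_all add: sum.remove)
      moreover have "(\<Sum>g\<in>G-{e}. c g) = (\<Sum>g\<in>G-{e}. c' g)" using ne by (intro sum.cong) auto
      moreover have "fact_len S c = fact_len S c'" using c c' unfolding M_def by simp
      ultimately have "c e = c' e" by simp
      with ne show "c = c'" by (intro ext) (metis)
    qed
    have "card M \<le> card (blowup_reps S (e - 1))"
      using card_inj_on_le[OF inj fin reps_fin] .
    then show ?thesis using dm by simp
  qed
qed

end



context mn
begin

lemma lower:
  shows "(e - 1) * e + (e - 1) \<in> S \<and> card (blowup_reps S (e - 1)) \<le> dmax_elem S ((e - 1) * e + (e - 1))"
proof -
  define n0 where "n0 = (e - 1) * e + (e - 1)"
  define R where "R = blowup_reps S (e - 1)"
  define h where "h x = x(e := (e - 1) - (\<Sum>g\<in>G-{e}. x g))" for x :: "nat \<Rightarrow> nat"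
  have key: "x e = 0 \<and> h x \<in> factorizations S n0 \<and> fact_len S (h x) = e - 1" if x: "x \<in> R" for x
  proof -
    have tot: "(\<Sum>g\<in>G. x g * w g) = e - 1" using x unfolding R_def blowup_reps_def by simp
    have "x e * e \<le> (\<Sum>g\<in>G. x g * w g)"
      using member_le_sum[of e G "\<lambda>g. x g * w g"] e_G G_fin w_e by simp
    then have le: "x e * e \<le> e - 1" using tot by simp
    have xe: "x e = 0"
    proof (rule ccontr)
      assume "x e \<noteq> 0"
      then have "1 * e \<le> x e * e" by (intro mult_right_mono) auto
      then have "e \<le> x e * e" by simp
      with le e_pos show False by linarith
    qed
    have sx: "(\<Sum>g\<in>G-{e}. x g * w g) = e - 1"
      using tot xe G_fin e_G by (simp add: sum.remove)
    define s where "s = (\<Sum>g\<in>G-{e}. x g)"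
    have "s \<le> (\<Sum>g\<in>G-{e}. x g * w g)" unfolding s_def using w_pos by (intro sum_mono) auto
    then have sle: "s \<le> e - 1" using sx by simp
    have supp: "\<forall>g. g \<notin> G \<longrightarrow> h x g = 0"
      using x e_G unfolding h_def R_def blowup_reps_def by auto
    have "(\<Sum>g\<in>G. h x g * g) = h x e * e + (\<Sum>g\<in>G-{e}. h x g * g)"
      using G_fin e_G by (simp add: sum.remove)
    also have "(\<Sum>g\<in>G-{e}. h x g * g) = (\<Sum>g\<in>G-{e}. x g * w g + x g * e)"
    proof (rule sum.cong)
      fix g assume g: "g \<in> G-{e}"
      then have "g = w g + e" by (intro w_dec) auto
      then show "h x g * g = x g * w g + x g * e" using g unfolding h_def by (simp add: add_mult_distrib2[symmetric])
    qed simp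
    also have "\<dots> = (e - 1) + s * e" using sx unfolding s_def by (simp add: sum.distrib sum_distrib_right)
    also have "h x e = e - 1 - s" unfolding h_def s_def by simp
    finally have "(\<Sum>g\<in>G. h x g * g) = (e - 1 - s) * e + ((e - 1) + s * e)" .
    also have "\<dots> = n0"
    proof -
      have "(e - 1 - s) * e + s * e = (e - 1 - s + s) * e" by (simp add: add_mult_distrib)
      also have "e - 1 - s + s = e - 1" using sle by linarith
      finally have "(e - 1 - s) * e + s * e = (e - 1) * e" by simp
      then show ?thesis unfolding n0_def by simp
    qed
    finally have f: "h x \<in> factorizations S n0" using supp unfolding factorizations_def by simp
    have "fact_len S (h x) = h x e + (\<Sum>g\<in>G-{e}. h x g)"
      unfolding fact_len_def using G_fin e_G by (simp add: sum.remove)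
    also have "(\<Sum>g\<in>G-{e}. h x g) = s" unfolding s_def h_def by (intro sum.cong) auto
    also have "h x e = e - 1 - s" unfolding h_def s_def by simp
    finally have "fact_len S (h x) = e - 1" using sle by simp
    with xe f show ?thesis by simp
  qed
  have "e - 1 \<in> blowup S" using bl by simp
  then obtain x0 where x0: "x0 \<in> R" unfolding blowup_def R_def by auto
  have n0S: "n0 \<in> S" using key[OF x0] fact_in_S by blast
  have ordn0: "ord S n0 = e - 1"
  proof (rule ord_eqI)
    show "h x0 \<in> factorizations S n0" "fact_len S (h x0) = e - 1" using key[OF x0] by auto
    fix c assume c: "c \<in> factorizations S n0"
    have "fact_len S c * e \<le> n0" using len_bound[OF _ c] G_ge_e by blast
    also have "n0 < e * e" unfolding n0_def using e_pos
      by (cases e) (auto simp: algebra_simps)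
    finally have "fact_len S c < e" by simp
    then show "fact_len S c \<le> e - 1" by simp
  qed
  have inj: "inj_on h R"
  proof (rule inj_onI)
    fix x y assume x: "x \<in> R" and y: "y \<in> R" and eq: "h x = h y"
    have "x = (h x)(e := 0)" using key[OF x] unfolding h_def by (intro ext) auto
    moreover have "y = (h y)(e := 0)" using key[OF y] unfolding h_def by (intro ext) auto
    ultimately show "x = y" using eq by simp
  qed
  have sub: "h ` R \<subseteq> {c \<in> factorizations S n0. fact_len S c = ord S n0}"
    using key ordn0 by auto
  have "card R \<le> card {c \<in> factorizations S n0. fact_len S c = ord S n0}"
    using card_inj_on_le[OF inj sub] fact_fin by simp
  then show ?thesis using n0S unfolding R_def n0_def dmax_elem_def by simp
qed

lemma main: "dmax S = d_blowup S (e - 1)"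
proof -
  define D where "D = card (blowup_reps S (e - 1))"
  define n0 where "n0 = (e - 1) * e + (e - 1)"
  have n0: "n0 \<in> S" "dmax_elem S n0 = D"
    using lower upper[of n0] unfolding n0_def D_def by (auto intro: antisym)
  have sub: "dmax_elem S ` S \<subseteq> {..D}" using upper unfolding D_def by auto
  have "Max (dmax_elem S ` S) = D"
  proof (rule Max_eqI)
    show "finite (dmax_elem S ` S)" using sub finite_subset by blast
    show "\<And>y. y \<in> dmax_elem S ` S \<Longrightarrow> y \<le> D" using sub by auto
    show "D \<in> dmax_elem S ` S" using n0 by (metis image_eqI)
  qed
  then show ?thesis unfolding dmax_def d_blowup_def D_def .
qed

end

theorem proposition4p13:
  fixes S :: "nat set"
  assumes "numerical_semigroup S"
    and "additive S"
    and "blowup S = UNIV"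
  shows "dmax S = d_blowup S (multiplicity S - 1)"
proof -
  interpret mn S using assms by unfold_locales auto
  show ?thesis by (rule main)
qed

end
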